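(* Let $K$ be a global function field, $\ell$ a rational prime coprime to the characteristic of $K$, and suppose a primitive $\ell$-th root of unity $\zeta_\ell$ lies in $K$. Let $x,d,a\in K^*$ with $dx^\ell+d^\ell\neq0$ and $a+a^{-1}\neq0$, and let $H=K\left(\sqrt[\ell]{1+d^{-1}},\sqrt[\ell]{1+(dx^\ell+d^\ell)^{-1}},\sqrt[\ell]{1+(a+a^{-1})d^{-1}}\right)$. Let $\mathfrak{p}$ be a prime of $K$ such that (i) $v_\mathfrak{p}(d)<0$; (ii) $v_\mathfrak{p}(dx^\ell)<v_\mathfrak{p}(d^\ell)$; (iii) $v_\mathfrak{p}(a)=0$ and the residue of $a$ at $\mathfrak{p}$ is not an $\ell$-th power in $\mathbb{F}_\mathfrak{p}^\times$; (iv) $v_\mathfrak{p}(d)\not\equiv0\pmod\ell$. Then for every prime $\mathfrak{q}$ of $H$ above $\mathfrak{p}$ we have $v_\mathfrak{q}(dx^\ell+d^\ell)\not\equiv0\pmod\ell$ and the residue of $a$ at $\mathfrak{q}$ is not an $\ell$-th power in $\mathbb{F}_\mathfrak{q}^\times$.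
   Context: For a prime $\mathfrak{p}$ of a global function field, $v_\mathfrak{p}$ denotes the normalized discrete valuation and $\mathbb{F}_\mathfrak{p}$ the residue field. *)

theory Defs
  imports Main "HOL-Computational_Algebra.Polynomial"
begin

text \<open>All fields live inside an ambient field of type 'a (e.g. an algebraic closure);
subfields are carrier sets.\<close>

definition is_subfield :: "'a::field set \<Rightarrow> bool" where
  "is_subfield F \<longleftrightarrow> 0 \<in> F \<and> 1 \<in> F \<and>
     (\<forall>x\<in>F. \<forall>y\<in>F. x + y \<in> F \<and> x * y \<in> F) \<and>
     (\<forall>x\<in>F. - x \<in> F \<and> inverse x \<in> F)"

definition gen_subfield :: "'a::field set \<Rightarrow> 'a set" where
  "gen_subfield S = \<Inter> {F. is_subfield F \<and> S \<subseteq> F}"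

definition prime_subfield :: "'a::field set" where
  "prime_subfield = gen_subfield {}"

definition transcendental_over :: "'a::field set \<Rightarrow> 'a \<Rightarrow> bool" where
  "transcendental_over F t \<longleftrightarrow>
     (\<forall>q::'a poly. q \<noteq> 0 \<longrightarrow> (\<forall>i. coeff q i \<in> F) \<longrightarrow> poly q t \<noteq> 0)"

definition finite_dim_over :: "'a::field set \<Rightarrow> 'a set \<Rightarrow> bool" where
  "finite_dim_over F K \<longleftrightarrow> (\<exists>B. finite B \<and> B \<subseteq> K \<and>
     (\<forall>x\<in>K. \<exists>c. (\<forall>b\<in>B. c b \<in> F) \<and> x = (\<Sum>b\<in>B. c b * b)))"

definition global_function_field :: "'a::field set \<Rightarrow> bool" where
  "global_function_field K \<longleftrightarrow> is_subfield K \<and> CHAR('a) > 0 \<and>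
     (\<exists>t\<in>K. transcendental_over prime_subfield t \<and>
        finite_dim_over (gen_subfield (insert t prime_subfield)) K)"

text \<open>Normalized discrete valuation on the subfield F (values on F - {0});
  surjectivity onto the integers = nontrivial and normalized.  For a global function
  field these are exactly the primes (places) of F.\<close>
definition normalized_valuation :: "'a::field set \<Rightarrow> ('a \<Rightarrow> int) \<Rightarrow> bool" where
  "normalized_valuation F v \<longleftrightarrow>
     (\<forall>x\<in>F - {0}. \<forall>y\<in>F - {0}. v (x * y) = v x + v y) \<and>
     (\<forall>x\<in>F - {0}. \<forall>y\<in>F - {0}. x + y \<noteq> 0 \<longrightarrow> min (v x) (v y) \<le> v (x + y)) \<and>
     v ` (F - {0}) = UNIV"

definition lies_above :: "'a::field set \<Rightarrow> ('a \<Rightarrow> int) \<Rightarrow> 'a set \<Rightarrow> ('a \<Rightarrow> int) \<Rightarrow> bool" where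
  "lies_above H w K v \<longleftrightarrow> (\<exists>e::int. e > 0 \<and> (\<forall>y\<in>K - {0}. w y = e * v y))"

definition val_ring :: "'a::field set \<Rightarrow> ('a \<Rightarrow> int) \<Rightarrow> 'a set" where
  "val_ring F v = {x\<in>F. x = 0 \<or> 0 \<le> v x}"

definition val_ideal :: "'a::field set \<Rightarrow> ('a \<Rightarrow> int) \<Rightarrow> 'a set" where
  "val_ideal F v = {x\<in>F. x = 0 \<or> 0 < v x}"

text \<open>The residue of a (a unit for v) is an n-th power in the multiplicative group of
  the residue field O/m: some unit b of O with b^n - a in m.\<close>
definition residue_is_power :: "'a::field set \<Rightarrow> ('a \<Rightarrow> int) \<Rightarrow> nat \<Rightarrow> 'a \<Rightarrow> bool" where
  "residue_is_power F v n a \<longleftrightarrow>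
     (\<exists>b\<in>val_ring F v. b \<notin> val_ideal F v \<and> b ^ n - a \<in> val_ideal F v)"

end

theory Submission imports Defs "HOL-Number_Theory.Number_Theory" begin

lemma gen_subfield_is_subfield: "is_subfield (gen_subfield S)"
  unfolding gen_subfield_def is_subfield_def by blast

lemma gen_subfield_sup: "S \<subseteq> gen_subfield S"
  unfolding gen_subfield_def by blast

lemma gen_subfield_least: "is_subfield F \<Longrightarrow> S \<subseteq> F \<Longrightarrow> gen_subfield S \<subseteq> F"
  unfolding gen_subfield_def by blast

lemma pow_comm: "((x::'a::monoid_mult) ^ a) ^ b = (x ^ b) ^ a"
  by (metis power_mult mult.commute)

locale subf =
  fixes F :: "'a::field set"
  assumes sub: "is_subfield F"
begin

lemma zero[simp]: "0 \<in> F" and one[simp]: "1 \<in> F"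
  using sub unfolding is_subfield_def by auto

lemma add[simp]: "x \<in> F \<Longrightarrow> y \<in> F \<Longrightarrow> x + y \<in> F"
  and mult[simp]: "x \<in> F \<Longrightarrow> y \<in> F \<Longrightarrow> x * y \<in> F"
  and uminus[simp]: "x \<in> F \<Longrightarrow> - x \<in> F"
  and inv[simp]: "x \<in> F \<Longrightarrow> inverse x \<in> F"
  using sub unfolding is_subfield_def by auto

lemma diff[simp]: "x \<in> F \<Longrightarrow> y \<in> F \<Longrightarrow> x - y \<in> F"
  by (metis add uminus diff_conv_add_uminus)

lemma divide[simp]: "x \<in> F \<Longrightarrow> y \<in> F \<Longrightarrow> x / y \<in> F"
  by (simp add: divide_inverse)

lemma power[simp]: "x \<in> F \<Longrightarrow> x ^ n \<in> F"
  by (induction n) auto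

lemma of_nat[simp]: "of_nat n \<in> F"
  by (induction n) auto

lemma sum[simp]: "(\<And>i. i \<in> A \<Longrightarrow> f i \<in> F) \<Longrightarrow> sum f A \<in> F"
  by (induction A rule: infinite_finite_induct) auto

end

locale vfield = subf F for F :: "'a::field set" +
  fixes w :: "'a \<Rightarrow> int"
  assumes nv: "normalized_valuation F w"
begin

lemma wmult: "x \<in> F \<Longrightarrow> y \<in> F \<Longrightarrow> x \<noteq> 0 \<Longrightarrow> y \<noteq> 0 \<Longrightarrow> w (x * y) = w x + w y"
  using nv unfolding normalized_valuation_def by auto

lemma ultra: "x \<in> F \<Longrightarrow> y \<in> F \<Longrightarrow> x \<noteq> 0 \<Longrightarrow> y \<noteq> 0 \<Longrightarrow> x + y \<noteq> 0 \<Longrightarrow> min (w x) (w y) \<le> w (x + y)"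
  using nv unfolding normalized_valuation_def by auto

lemma surj: "w ` (F - {0}) = UNIV"
  using nv unfolding normalized_valuation_def by auto

lemma w1[simp]: "w 1 = 0"
  using wmult[of 1 1] by simp

lemma wpow: "x \<in> F \<Longrightarrow> x \<noteq> 0 \<Longrightarrow> w (x ^ n) = int n * w x"
  by (induction n) (auto simp: wmult algebra_simps)

lemma wm1[simp]: "w (-1) = 0"
  using wmult[of "-1" "-1"] by simp

lemma wuminus[simp]: "x \<in> F \<Longrightarrow> w (- x) = w x"
  using wmult[of "-1" x] by (cases "x = 0") auto

lemma ultra_strict:
  assumes "x \<in> F" "y \<in> F" "x \<noteq> 0" "y \<noteq> 0" "x + y \<noteq> 0" "w x < w y"
  shows "w (x + y) = w x"
proof -
  have a: "min (w x) (w y) \<le> w (x + y)" using ultra assms by blast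
  have "min (w (x + y)) (w (- y)) \<le> w ((x + y) + (- y))"
    by (rule ultra) (use assms in auto)
  then have "min (w (x + y)) (w (- y)) \<le> w x" by simp
  moreover have "w (- y) = w y" using wuminus assms by blast
  ultimately show ?thesis using a assms(6) by linarith
qed

lemma winv: "x \<in> F \<Longrightarrow> x \<noteq> 0 \<Longrightarrow> w (inverse x) = - w x"
  using wmult[of x "inverse x"] by simp

lemma wroot: "x \<in> F \<Longrightarrow> x ^ n = 1 \<Longrightarrow> n > 0 \<Longrightarrow> w x = 0"
  using wpow[of x n] by (cases "x = 0") (auto simp: zero_power)

definition ge :: "'a \<Rightarrow> int \<Rightarrow> bool" where
  "ge x N \<longleftrightarrow> x \<in> F \<and> (x = 0 \<or> N \<le> w x)"

lemma ge_in: "ge x N \<Longrightarrow> x \<in> F" by (simp add: ge_def)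

lemma ge_mono: "ge x N \<Longrightarrow> M \<le> N \<Longrightarrow> ge x M"
  by (auto simp: ge_def)

lemma ge_zero[simp]: "ge 0 N" by (simp add: ge_def)

lemma ge_one: "ge 1 0" by (simp add: ge_def)

lemma ge_add: "ge x N \<Longrightarrow> ge y N \<Longrightarrow> ge (x + y) N"
  unfolding ge_def using ultra[of x y] by fastforce

lemma ge_uminus: "ge x N \<Longrightarrow> ge (- x) N"
  unfolding ge_def by auto

lemma ge_uminus_iff: "ge (- x) N \<longleftrightarrow> ge x N"
  using ge_uminus[of x N] ge_uminus[of "-x" N] by auto

lemma ge_diff: "ge x N \<Longrightarrow> ge y N \<Longrightarrow> ge (x - y) N"
  using ge_add[of x N "-y"] ge_uminus by simp

lemma ge_commute: "ge (x - y) N \<longleftrightarrow> ge (y - x) N"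
  using ge_uminus_iff[of "x - y" N] by simp

lemma ge_mult: "ge x N \<Longrightarrow> ge y M \<Longrightarrow> ge (x * y) (N + M)"
proof -
  assume a: "ge x N" "ge y M"
  show ?thesis
  proof (cases "x = 0 \<or> y = 0")
    case True then show ?thesis using a by (auto simp: ge_def)
  next
    case False then show ?thesis using a wmult[of x y] by (auto simp: ge_def)
  qed
qed

lemma ge_mult0: "ge x N \<Longrightarrow> ge y 0 \<Longrightarrow> ge (x * y) N"
  using ge_mult[of x N y 0] by simp

lemma ge_pow: "ge x 0 \<Longrightarrow> ge (x ^ n) 0"
  by (induction n) (auto simp: ge_one dest: ge_mult)

lemma ge_sum: "(\<And>i. i \<in> A \<Longrightarrow> ge (f i) N) \<Longrightarrow> ge (sum f A) N"
  by (induction A rule: infinite_finite_induct) (auto intro: ge_add)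

lemma ge_w: "x \<in> F \<Longrightarrow> ge x (w x)" by (simp add: ge_def)

lemma close:
  assumes h: "h \<in> F" "h \<noteq> 0" and c: "c \<in> F" and g: "ge (h - c) (w h + 1)"
  shows "c \<noteq> 0 \<and> w c = w h"
proof (cases "h - c = 0")
  case True then show ?thesis using h by simp
next
  case False
  then have g1: "w (h - c) \<ge> w h + 1" using g by (simp add: ge_def)
  have c0: "c \<noteq> 0" using g1 h by auto
  have "min (w h) (w (-(h - c))) \<le> w (h + (-(h-c)))"
    by (rule ultra) (use h c False c0 in auto)
  moreover have "w (c - h) = w (h - c)" using wuminus[of "h - c"] h c by simp
  ultimately have a: "w h \<le> w c" using g1 h c by (simp add: min_def split: if_splits)
  have "min (w c) (w (h - c)) \<le> w (c + (h-c))"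
    by (rule ultra) (use h c False c0 in auto)
  then have "w h \<ge> w c" using g1 a by (simp add: min_def split: if_splits)
  with a c0 show ?thesis by simp
qed

lemma ge_powdiff:
  assumes "ge (x - y) m" "ge x 0" "ge y 0"
  shows "ge (x ^ n - y ^ n) m"
proof -
  have "x ^ n - y ^ n = (x - y) * (\<Sum>i<n. y ^ (n - Suc i) * x ^ i)"
    by (rule power_diff_sumr2)
  moreover have "ge (\<Sum>i<n. y ^ (n - Suc i) * x ^ i) 0"
    by (rule ge_sum) (use assms in \<open>auto intro: ge_mult0 ge_pow\<close>)
  ultimately show ?thesis using ge_mult0 assms(1) by metis
qed

lemma ge_int_of_w0: "x \<in> F \<Longrightarrow> w x = 0 \<Longrightarrow> ge x 0" by (simp add: ge_def)

lemma ge_inv0: "x \<in> F \<Longrightarrow> w x = 0 \<Longrightarrow> ge (inverse x) 0"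
  by (cases "x = 0") (auto simp: ge_def winv)

lemma w_of_nat:
  assumes "CHAR('a) > 0" "(of_nat n :: 'a) \<noteq> 0"
  shows "w (of_nat n) = 0"
proof -
  define p where "p = CHAR('a)"
  have pp: "prime p" using prime_CHAR_semidom assms(1) p_def by blast
  have nd: "\<not> p dvd n" using assms(2) by (simp add: of_nat_eq_0_iff_char_dvd p_def)
  have "[n ^ (p - 1) = 1] (mod p)" by (rule fermat_theorem[OF pp nd])
  then have "(of_nat n :: 'a) ^ (p - 1) = 1"
    by (metis of_nat_eq_iff_cong_CHAR of_nat_power of_nat_1 p_def)
  moreover have "p - 1 > 0" using pp prime_gt_1_nat by fastforce
  ultimately show ?thesis using wroot[of "of_nat n" "p - 1"] by simp
qed


lemma root_near:
  assumes l: "0 < l" and z: "\<zeta> \<in> F" "\<zeta> ^ l = 1" "\<forall>k. 0 < k \<and> k < l \<longrightarrow> \<zeta> ^ k \<noteq> 1"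
    and wl: "w (of_nat l) = 0" "(of_nat l :: 'a) \<noteq> 0"
    and y: "y \<in> F" "ge (y ^ l - 1) 1"
  shows "\<exists>k<l. ge (y - \<zeta> ^ k) 1"
proof (rule ccontr)
  assume nk: "\<not> (\<exists>k<l. ge (y - \<zeta> ^ k) 1)"
  have y0: "y \<noteq> 0"
  proof
    assume "y = 0"
    then have "ge (-1) 1" using y l by (simp add: zero_power)
    then show False by (simp add: ge_def)
  qed
  have "ge (1 - y ^ l) (w 1 + 1)" using y(2) ge_commute by simp
  then have "w (y ^ l) = 0" using close[of 1 "y ^ l"] y by simp
  then have wy: "w y = 0" using wpow[of y l] y y0 l by simp
  have wz: "w \<zeta> = 0" using wroot z l by blast
  define Q where "Q k = (\<Sum>i<l. (\<zeta> ^ k) ^ (l - Suc i) * y ^ i)" for k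
  have Qk: "ge (Q k) 1" if k: "k < l" for k
  proof -
    have zk: "\<zeta> ^ k \<in> F" "ge (\<zeta> ^ k) 0" using z wz by (auto intro: ge_pow ge_int_of_w0)
    have g0: "ge (y - \<zeta> ^ k) 0" using zk y wy by (auto intro: ge_diff ge_int_of_w0)
    have n1: "\<not> ge (y - \<zeta> ^ k) 1" using nk k by blast
    have d0: "y - \<zeta> ^ k \<noteq> 0" and wd: "w (y - \<zeta> ^ k) = 0"
      using g0 n1 by (auto simp: ge_def)
    have "(\<zeta> ^ k) ^ l = 1" using z(2) by (metis pow_comm power_one)
    then have "y ^ l - 1 = (y - \<zeta> ^ k) * Q k"
      using power_diff_sumr2[of y l "\<zeta> ^ k"] Q_def by simp
    then have "Q k = (y ^ l - 1) * inverse (y - \<zeta> ^ k)" using d0 by (simp add: field_simps)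
    then show ?thesis using ge_mult0[OF y(2) ge_inv0[of "y - \<zeta> ^ k"]] wd zk y by simp
  qed
  have gs: "ge (\<Sum>k<l. Q k) 1" by (rule ge_sum) (use Qk in auto)
  have inner: "(\<Sum>k<l. (\<zeta> ^ (l - Suc i)) ^ k) = (if i = l - 1 then of_nat l else 0)" if i: "i < l" for i
  proof (cases "i = l - 1")
    case True then show ?thesis using i by simp
  next
    case False
    then have ne: "\<zeta> ^ (l - Suc i) \<noteq> 1" using z(3) i by auto
    have "(\<zeta> ^ (l - Suc i)) ^ l = 1" using z(2) by (metis pow_comm power_one)
    then show ?thesis using ne False by (simp add: sum_gp_strict)
  qed
  have "(\<Sum>k<l. Q k) = (\<Sum>i<l. y ^ i * (\<Sum>k<l. (\<zeta> ^ (l - Suc i)) ^ k))"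
    unfolding Q_def sum_distrib_left
    by (subst sum.swap) (simp add: pow_comm mult.commute)
  also have "\<dots> = (\<Sum>i<l. if i = l - 1 then y ^ i * of_nat l else 0)"
    by (rule sum.cong) (auto simp: inner)
  also have "\<dots> = y ^ (l - 1) * of_nat l" using l by (simp add: sum.delta)
  finally have eq: "(\<Sum>k<l. Q k) = y ^ (l - 1) * of_nat l" .
  have "w (y ^ (l - 1) * of_nat l) = 0" using wmult[of "y ^ (l - 1)" "of_nat l"] wpow[of y] y y0 wy wl
    by simp
  moreover have "y ^ (l - 1) * of_nat l \<noteq> 0" using y0 wl by simp
  ultimately show False using gs eq by (simp add: ge_def)
qed


lemma newton:
  assumes l: "0 < l" "(of_nat l :: 'a) \<noteq> 0" "w (of_nat l) = 0"
    and K: "subf K" "K \<subseteq> F"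
    and y: "y \<in> F" "y ^ l \<in> K" "w y = 0" "y \<noteq> 0"
    and s: "s \<in> K" "ge (y - s) m" and m: "m \<ge> 1"
  shows "\<exists>s'\<in>K. ge (y - s') (m + 1)"
proof (cases "y - s = 0")
  case True then show ?thesis using s by (intro bexI[of _ s]) auto
next
  case False
  interpret k: subf K by (rule K(1))
  have sF: "s \<in> F" using s K by auto
  have "ge (y - s) (w y + 1)" using s m y ge_mono by simp
  then have s0: "s \<noteq> 0" and ws: "w s = 0" using close[of y s] y sF False by auto
  define L where "L = of_nat l * s ^ (l - 1)"
  have LK: "L \<in> K" unfolding L_def using s by simp
  have LF: "L \<in> F" using LK K by auto
  have wL: "w L = 0" unfolding L_def using wmult[of "of_nat l" "s ^ (l - 1)"] wpow[of s] sF s0 ws l by simp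
  have L0: "L \<noteq> 0" unfolding L_def using l s0 by simp
  define s' where "s' = s - (s ^ l - y ^ l) / L"
  have s'K: "s' \<in> K" unfolding s'_def using s y LK by simp
  define P where "P = (\<Sum>i<l. y ^ (l - Suc i) * s ^ i)"
  have sP: "s ^ l - y ^ l = (s - y) * P" unfolding P_def by (rule power_diff_sumr2)
  have eq1: "s' - y = (s - y) * (L - P) * inverse L"
    unfolding s'_def sP using L0 by (simp add: field_simps)
  have LP: "L - P = (\<Sum>i<l. s ^ i * (s ^ (l - Suc i) - y ^ (l - Suc i)))"
  proof -
    have "L = (\<Sum>i<l. s ^ (l - 1))" unfolding L_def by simp
    also have "\<dots> = (\<Sum>i<l. s ^ i * s ^ (l - Suc i))"
      by (rule sum.cong) (auto simp flip: power_add)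
    finally show ?thesis unfolding P_def
      by (simp add: sum_subtractf[symmetric] algebra_simps)
  qed
  have gLP: "ge (L - P) m"
  proof -
    have "ge (s ^ i * (s ^ (l - Suc i) - y ^ (l - Suc i))) m" for i
    proof -
      have "ge (s - y) m" using s(2) ge_commute by simp
      then have "ge (s ^ (l - Suc i) - y ^ (l - Suc i)) m"
        using ge_powdiff ge_int_of_w0 sF ws y by blast
      moreover have "ge (s ^ i) 0" using ge_pow ge_int_of_w0 sF ws by blast
      ultimately show ?thesis using ge_mult0 by (metis mult.commute)
    qed
    then show ?thesis unfolding LP by (simp add: ge_sum)
  qed
  have g1: "ge (s - y) m" using s(2) ge_commute by simp
  have "ge ((s - y) * (L - P) * inverse L) (m + m)"
    by (rule ge_mult0[OF ge_mult[OF g1 gLP] ge_inv0[OF LF wL]])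
  then have "ge (s' - y) (m + m)" by (simp only: eq1)
  then have "ge (y - s') (m + 1)" using ge_commute[of s' y] ge_mono[of "s' - y" "m + m" "m + 1"] m by simp
  then show ?thesis using s'K by blast
qed

lemma approx_root:
  assumes l: "0 < l" "(of_nat l :: 'a) \<noteq> 0" "w (of_nat l) = 0"
    and K: "subf K" "K \<subseteq> F"
    and y: "y \<in> F" "y ^ l \<in> K" "w y = 0" "y \<noteq> 0"
    and s: "s \<in> K" "ge (y - s) 1"
  shows "\<exists>c\<in>K. ge (y - c) N"
proof -
  have "\<exists>c\<in>K. ge (y - c) (1 + int n)" for n
  proof (induction n)
    case 0 then show ?case using s by auto
  next
    case (Suc n)
    then obtain c where "c \<in> K" "ge (y - c) (1 + int n)" by blast
    from newton[OF l K y this] show ?case by (simp add: add.assoc)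
  qed
  then obtain c where "c \<in> K" "ge (y - c) (1 + int (nat N))" by blast
  moreover have "N \<le> 1 + int (nat N)" by simp
  ultimately show ?thesis using ge_mono[of "y - c" "1 + int (nat N)" N] by blast
qed

definition apx :: "'a set \<Rightarrow> 'a set" where
  "apx K = {h \<in> F. \<forall>N. \<exists>c\<in>K. ge (h - c) N}"

lemma apx_subfield:
  assumes K: "subf K" "K \<subseteq> F"
  shows "is_subfield (apx K)"
proof -
  interpret k: subf K by (rule K(1))
  have KA: "K \<subseteq> apx K"
  proof
    fix h assume h: "h \<in> K"
    have "ge (h - h) N" for N by simp
    then have "\<forall>N. \<exists>c\<in>K. ge (h - c) N" using h by blast
    then show "h \<in> apx K" using h K(2) unfolding apx_def by blast
  qed
  have addA: "x + y \<in> apx K" if xy: "x \<in> apx K" "y \<in> apx K" for x y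
  proof -
    have "\<exists>c\<in>K. ge (x + y - c) N" for N
    proof -
      obtain c1 c2 where "c1 \<in> K" "c2 \<in> K" "ge (x - c1) N" "ge (y - c2) N"
        using xy unfolding apx_def by blast
      moreover have eq: "x + y - (c1 + c2) = (x - c1) + (y - c2)" by simp
      ultimately have "ge (x + y - (c1 + c2)) N" unfolding eq by (intro ge_add) auto
      then show ?thesis using \<open>c1 \<in> K\<close> \<open>c2 \<in> K\<close> by (meson k.add bexI)
    qed
    then show ?thesis using xy unfolding apx_def by auto
  qed
  have negA: "- x \<in> apx K" if xA: "x \<in> apx K" for x
  proof -
    have "\<exists>c\<in>K. ge (- x - c) N" for N
    proof -
      obtain c1 where "c1 \<in> K" "ge (x - c1) N"
        using xA unfolding apx_def by blast
      moreover have eq: "- x - (- c1) = - (x - c1)" by simp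
      ultimately have "ge (- x - (- c1)) N" unfolding eq by (intro ge_uminus) auto
      then show ?thesis using \<open>c1 \<in> K\<close> by (meson k.uminus bexI)
    qed
    then show ?thesis using xA unfolding apx_def by auto
  qed
  have multA: "x * y \<in> apx K" if xy: "x \<in> apx K" "y \<in> apx K" for x y
  proof (cases "x = 0 \<or> y = 0")
    case True then show ?thesis using KA by auto
  next
    case False
    have xF: "x \<in> F" "y \<in> F" using xy unfolding apx_def by auto
    have "\<exists>c\<in>K. ge (x * y - c) N" for N
    proof -
      obtain c2 where c2: "c2 \<in> K" "ge (y - c2) (max (N - w x) (w y + 1))"
        using xy(2) unfolding apx_def by blast
      have c2F: "c2 \<in> F" using c2 K by auto
      have "ge (y - c2) (w y + 1)" using ge_mono[OF c2(2)] by simp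
      then have wc2: "w c2 = w y" using close[of y c2] c2F xF False by auto
      obtain c1 where c1: "c1 \<in> K" "ge (x - c1) (N - w y)"
        using xy(1) unfolding apx_def by blast
      have "x * y - c1 * c2 = x * (y - c2) + c2 * (x - c1)" by (simp add: algebra_simps)
      moreover have "ge (x * (y - c2)) N"
        using ge_mult[OF ge_w[OF xF(1)] ge_mono[OF c2(2), of "N - w x"]] by simp
      moreover have "ge (c2 * (x - c1)) N"
        using ge_mult[OF ge_w[OF c2F] c1(2)] wc2 by simp
      ultimately have "ge (x * y - c1 * c2) N" using ge_add by simp
      then show ?thesis using c1(1) c2(1) by (meson k.mult bexI)
    qed
    then show ?thesis using xF unfolding apx_def by auto
  qed
  have invA: "inverse x \<in> apx K" if x: "x \<in> apx K" for x
  proof (cases "x = 0")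
    case True then show ?thesis using KA by auto
  next
    case False
    have xF: "x \<in> F" using x unfolding apx_def by auto
    have "\<exists>c\<in>K. ge (inverse x - c) N" for N
    proof -
      obtain c where c: "c \<in> K" "ge (x - c) (max (N + 2 * w x) (w x + 1))"
        using x unfolding apx_def by blast
      have cF: "c \<in> F" using c K by auto
      have "ge (x - c) (w x + 1)" using ge_mono[OF c(2)] by simp
      then have c0: "c \<noteq> 0" and wc: "w c = w x" using close[of x c] cF xF False by auto
      have "inverse x - inverse c = (c - x) * (inverse x * inverse c)"
        using c0 False by (simp add: field_simps)
      moreover have "ge (c - x) (N + 2 * w x)" using ge_mono[OF c(2), of "N + 2 * w x"] ge_commute by simp
      moreover have "ge (inverse x * inverse c) (- 2 * w x)"
        using ge_mult[OF ge_w[of "inverse x"] ge_w[of "inverse c"]] winv cF xF c0 False wc by simp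
      ultimately have "ge (inverse x - inverse c) N" using ge_mult[of "c - x" "N + 2 * w x" "inverse x * inverse c" "- 2 * w x"] by simp
      then show ?thesis using c by auto
    qed
    then show ?thesis using xF unfolding apx_def by auto
  qed
  have "0 \<in> apx K" "1 \<in> apx K" using KA by auto
  then show ?thesis unfolding is_subfield_def by (simp add: addA multA negA invA)
qed

end
theorem lemma3p6:
  fixes K H :: "'a::field set" and l :: nat and \<zeta> x d a \<alpha> \<beta> \<gamma> :: 'a
    and v w :: "'a \<Rightarrow> int"
  assumes K: "global_function_field K"
    and l: "prime l" "\<not> l dvd CHAR('a)"
    and zeta: "\<zeta> \<in> K" "\<zeta> ^ l = 1" "\<forall>k. 0 < k \<and> k < l \<longrightarrow> \<zeta> ^ k \<noteq> 1"
    and xda: "x \<in> K - {0}" "d \<in> K - {0}" "a \<in> K - {0}"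
    and nz: "d * x ^ l + d ^ l \<noteq> 0" "a + inverse a \<noteq> 0"
    and roots: "\<alpha> ^ l = 1 + inverse d"
               "\<beta> ^ l = 1 + inverse (d * x ^ l + d ^ l)"
               "\<gamma> ^ l = 1 + (a + inverse a) * inverse d"
    and H: "H = gen_subfield (K \<union> {\<alpha>, \<beta>, \<gamma>})"
    and p: "normalized_valuation K v"
    and i: "v d < 0"
    and ii: "v (d * x ^ l) < v (d ^ l)"
    and iii: "v a = 0" "\<not> residue_is_power K v l a"
    and iv: "\<not> int l dvd v d"
    and q: "normalized_valuation H w" "lies_above H w K v"
  shows "\<not> int l dvd w (d * x ^ l + d ^ l) \<and> \<not> residue_is_power H w l a"
proof -
  have Ksub: "is_subfield K" using K[unfolded global_function_field_def] by (rule conjunct1)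
  have char: "CHAR('a) > 0" using K[unfolded global_function_field_def] by (elim conjE)
  interpret Kf: vfield K v using Ksub p by (simp add: vfield_def subf_def vfield_axioms_def)
  have Hsub: "is_subfield H" unfolding H by (rule gen_subfield_is_subfield)
  interpret Hf: vfield H w using Hsub q(1) by (simp add: vfield_def subf_def vfield_axioms_def)
  have KsubF: "subf K" using Ksub by (simp add: subf_def)
  have sup: "K \<union> {\<alpha>, \<beta>, \<gamma>} \<subseteq> H" unfolding H by (rule gen_subfield_sup)
  then have KH: "K \<subseteq> H" and abcH: "\<alpha> \<in> H" "\<beta> \<in> H" "\<gamma> \<in> H" by auto
  obtain e where e: "e > 0" "\<forall>y\<in>K-{0}. w y = e * v y"
    using q(2) unfolding lies_above_def by blast
  have l0: "0 < l" using l(1) prime_gt_0_nat by blast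
  have ln0: "(of_nat l :: 'a) \<noteq> 0"
  proof
    assume "(of_nat l :: 'a) = 0"
    then have "CHAR('a) dvd l" by (simp add: of_nat_eq_0_iff_char_dvd)
    moreover have "prime CHAR('a)" using prime_CHAR_semidom char by blast
    ultimately have "CHAR('a) = 1 \<or> CHAR('a) = l" using l(1) unfolding prime_nat_iff by blast
    then have "CHAR('a) = l" using \<open>prime CHAR('a)\<close> by auto
    then show False using l(2) by simp
  qed
  have wl: "w (of_nat l) = 0" using Hf.w_of_nat[OF char ln0] .
  have zH: "\<zeta> \<in> H" using zeta KH by auto
  have small: "Hf.ge u 1" if u: "u \<in> K" "u \<noteq> 0" "v u \<ge> 1" for u
  proof -
    have "w u = e * v u" using e u by auto
    moreover have "1 * 1 \<le> e * v u" by (rule mult_mono) (use e u in auto)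
    ultimately show ?thesis using e u KH by (auto simp: Hf.ge_def)
  qed
  have KA: "K \<subseteq> Hf.apx K"
  proof
    fix h assume h: "h \<in> K"
    have "Hf.ge (h - h) N" for N by simp
    then have "\<forall>N. \<exists>c\<in>K. Hf.ge (h - c) N" using h by blast
    then show "h \<in> Hf.apx K" using h KH unfolding Hf.apx_def by blast
  qed
  have apxy: "y \<in> Hf.apx K" if y: "y \<in> H" "y ^ l = 1 + u" "u \<in> K" "u \<noteq> 0" "v u \<ge> 1" for y u
  proof -
    have gu: "Hf.ge u 1" using small y by blast
    have g1: "Hf.ge (y ^ l - 1) 1" using gu y by simp
    have y0: "y \<noteq> 0"
    proof
      assume "y = 0"
      then have "1 + u = 0" using y l0 by (simp add: zero_power)
      then have "u = -1" using add_eq_0_iff[of 1 u] by simp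
      then show False using y Kf.wm1 by simp
    qed
    have "Hf.ge (1 - y ^ l) (w 1 + 1)" using g1 Hf.ge_commute by simp
    moreover have "1 + u \<in> H" using y KH by auto
    ultimately have "w (y ^ l) = 0" using Hf.close[of 1 "y ^ l"] y by simp
    then have wy: "w y = 0" using Hf.wpow[of y l] y y0 l0 by simp
    obtain k where "k < l" "Hf.ge (y - \<zeta> ^ k) 1"
      using Hf.root_near[OF l0 zH zeta(2,3) wl ln0 y(1) g1] by blast
    moreover have "\<zeta> ^ k \<in> K" using zeta by simp
    moreover have "y ^ l \<in> K" using y by simp
    ultimately have "\<exists>c\<in>K. Hf.ge (y - c) N" for N
      using Hf.approx_root[OF l0 ln0 wl KsubF KH y(1) _ wy y0] by blast
    then show ?thesis using y unfolding Hf.apx_def by blast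
  qed
  have d0: "d \<in> K" "d \<noteq> 0" and x0: "x \<in> K" "x \<noteq> 0" and a0: "a \<in> K" "a \<noteq> 0"
    using xda by auto
  have "v (inverse d) \<ge> 1" using Kf.winv[OF d0] i by simp
  then have aA: "\<alpha> \<in> Hf.apx K" using apxy[OF abcH(1) roots(1)] d0 by simp
  define D where "D = d * x ^ l + d ^ l"
  have D0: "D \<in> K" "D \<noteq> 0" using nz d0 x0 unfolding D_def by auto
  have vD: "v D = v d + int l * v x"
  proof -
    have "v D = v (d * x ^ l)" unfolding D_def
      by (rule Kf.ultra_strict) (use d0 x0 nz ii in auto)
    also have "\<dots> = v d + int l * v x" using Kf.wmult Kf.wpow d0 x0 by simp
    finally show ?thesis .
  qed
  have "v (d ^ l) = int l * v d" using Kf.wpow d0 by simp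
  moreover have "int l * v d < 0" using l0 i by (simp add: mult_pos_neg)
  moreover have "v D < v (d ^ l)" using vD ii Kf.wmult Kf.wpow d0 x0 by (simp add: D_def)
  ultimately have "v D < 0" by linarith
  then have "v (inverse D) \<ge> 1" using Kf.winv[OF D0] by simp
  then have bA: "\<beta> \<in> Hf.apx K" using apxy[OF abcH(2) roots(2)[folded D_def]] D0 by simp
  define S where "S = a + inverse a"
  have S0: "S \<in> K" "S \<noteq> 0" using a0 nz unfolding S_def by auto
  have "min (v a) (v (inverse a)) \<le> v S" unfolding S_def
    by (rule Kf.ultra) (use a0 nz in auto)
  then have vS: "v S \<ge> 0" using Kf.winv[OF a0] iii by simp
  have "v (S * inverse d) = v S + v (inverse d)" using Kf.wmult S0 d0 by simp
  then have "v (S * inverse d) \<ge> 1" using vS Kf.winv[OF d0] i by simp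
  then have cA: "\<gamma> \<in> Hf.apx K"
    using apxy[OF abcH(3) roots(3)[folded S_def]] S0 d0 by simp
  have "is_subfield (Hf.apx K)" by (rule Hf.apx_subfield[OF KsubF KH])
  then have "gen_subfield (K \<union> {\<alpha>, \<beta>, \<gamma>}) \<subseteq> Hf.apx K"
    by (rule gen_subfield_least) (use KA aA bA cA in auto)
  then have HA: "H \<subseteq> Hf.apx K" by (simp only: H)
  have apprx: "\<exists>c\<in>K. Hf.ge (h - c) N" if "h \<in> H" for h N
    using HA that unfolding Hf.apx_def by blast
  have "(1::int) \<in> w ` (H - {0})" using Hf.surj by simp
  then obtain h where h0: "h \<in> H - {0}" "1 = w h" by (rule imageE)
  then have h: "h \<in> H" "h \<noteq> 0" "w h = 1" by simp_all
  obtain c where c: "c \<in> K" "Hf.ge (h - c) (w h + 1)" using apprx h by blast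
  then have "c \<noteq> 0" "w c = 1" using Hf.close[of h c] h KH by auto
  then have "e * v c = 1" using e c by auto
  then have e1: "e = 1" using e(1) pos_zmult_eq_1_iff by blast
  have wv: "w y = v y" if "y \<in> K" "y \<noteq> 0" for y using e e1 that by auto
  have part1: "\<not> int l dvd w D"
  proof
    assume "int l dvd w D"
    then have "int l dvd v d + int l * v x" using wv D0 vD by simp
    then show False using iv by (simp add: dvd_add_left_iff)
  qed
  have part2: "\<not> residue_is_power H w l a"
  proof
    assume "residue_is_power H w l a"
    then obtain b where b: "b \<in> val_ring H w" "b \<notin> val_ideal H w" "b ^ l - a \<in> val_ideal H w"
      unfolding residue_is_power_def by blast
    have bH: "b \<in> H" and b0: "b \<noteq> 0" and wb: "w b = 0"
      using b(1,2) unfolding val_ring_def val_ideal_def by auto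
    have gba: "Hf.ge (b ^ l - a) 1" using b(3) unfolding val_ideal_def Hf.ge_def by auto
    obtain c where c: "c \<in> K" "Hf.ge (b - c) (w b + 1)" using apprx bH by blast
    have cH: "c \<in> H" using c KH by auto
    then have c0: "c \<noteq> 0" and wc: "w c = 0" using Hf.close[of b c] bH b0 c wb by auto
    have "Hf.ge (c ^ l - b ^ l) 1"
      by (rule Hf.ge_powdiff) (use c wb wc cH bH Hf.ge_commute Hf.ge_int_of_w0 in auto)
    moreover have eqc: "c ^ l - a = (c ^ l - b ^ l) + (b ^ l - a)" by simp
    ultimately have g: "Hf.ge (c ^ l - a) 1" unfolding eqc by (intro Hf.ge_add gba)
    have caK: "c ^ l - a \<in> K" using c a0 by simp
    have "c ^ l - a \<in> val_ideal K v"
    proof (cases "c ^ l - a = 0")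
      case True then show ?thesis using caK by (simp add: val_ideal_def)
    next
      case False then show ?thesis using g wv[OF caK False] caK by (auto simp: Hf.ge_def val_ideal_def)
    qed
    moreover have "c \<in> val_ring K v" "c \<notin> val_ideal K v"
      using wv[OF c(1) c0] wc c(1) c0 by (auto simp: val_ring_def val_ideal_def)
    ultimately have "residue_is_power K v l a" unfolding residue_is_power_def by blast
    then show False using iii by blast
  qed
  show ?thesis using part1 part2 unfolding D_def by blast
qed

end
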